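(* Let $V_0,V_1,\dots,V_k$ be smooth vector fields on $\mathbb{R}^k$, $L=\sum_{i=1}^kV_i^2+V_0$, and let $\sigma=(\sigma_1,\dots,\sigma_k):\mathbb{R}^k\to\mathbb{R}^k$ be a $C^1$ map with \[C_\sigma:=\sup_{p\in\mathbb{R}^k}\Big(\sum_{i,j=1}^k(V_i\sigma_j(p))^2\Big)^{1/2}<\infty .\] On functions $f(p,\xi)$, $p,\xi\in\mathbb{R}^k$, let $\mathcal{L}=L+\sum_{i=1}^k\sigma_i(p)\frac{\partial}{\partial\xi_i}$ (with $L$ acting in $p$). Define $\Gamma(f)=\frac12(\mathcal{L}f^2-2f\mathcal{L}f)$, $\Gamma_2(f)=\frac12(\mathcal{L}\Gamma(f)-2\Gamma(f,\mathcal{L}f))$, $\Gamma^L(f)=\frac12(Lf^2-2fLf)$, $\Gamma_2^L(f)=\frac12(L\Gamma^L(f)-2\Gamma^L(f,Lf))$, $\Gamma^Z(f)=\|\nabla_\xi f\|^2$ and $\Gamma_2^Z(f)=\frac12(\mathcal{L}\Gamma^Z(f)-2\Gamma^Z(f,\mathcal{L}f))$, bilinear versions being obtained by polarization. If for some $\rho\in\mathbb{R}$ we have $\Gamma_2^L(f)\ge\rho\,\Gamma^L(f)$ for all smooth $f$, then for every $f\in C^\infty(\mathbb{R}^k\times\mathbb{R}^k)$, \[\Gamma_2(f)\ge\Big(\rho-\frac{C_\sigma}{2}\Big)\Gamma(f)-\frac{C_\sigma}{2}\Gamma^Z(f),\qquad\Gamma_2^Z(f)\ge0 .\]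
   Context: $\nabla_\xi$ denotes the Euclidean gradient in the variable $\xi\in\mathbb{R}^k$ and $\|\cdot\|$ the Euclidean norm. *)

theory Defs
  imports "HOL-Analysis.Analysis"
begin

definition dderiv :: "'a::real_normed_vector \<Rightarrow> ('a \<Rightarrow> real) \<Rightarrow> 'a \<Rightarrow> real" where
  "dderiv v g x = frechet_derivative g (at x) v"

definition smooth :: "('a::real_normed_vector \<Rightarrow> real) \<Rightarrow> bool" where
  "smooth g \<longleftrightarrow> (\<forall>vs x. foldr dderiv vs g differentiable (at x))"

definition smooth_vf :: "(real^'k \<Rightarrow> real^'k) \<Rightarrow> bool" where
  "smooth_vf V \<longleftrightarrow> (\<forall>j. smooth (\<lambda>p. V p $ j))"

definition C1_map :: "(real^'k \<Rightarrow> real^'k) \<Rightarrow> bool" where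
  "C1_map s \<longleftrightarrow> (\<forall>x. s differentiable (at x)) \<and>
      (\<forall>v. continuous_on UNIV (\<lambda>x. frechet_derivative s (at x) v))"

definition vf_app :: "(real^'k \<Rightarrow> real^'k) \<Rightarrow> (real^'k \<Rightarrow> real) \<Rightarrow> real^'k \<Rightarrow> real" where
  "vf_app V g p = frechet_derivative g (at p) (V p)"

definition Lop :: "('k::finite \<Rightarrow> real^'k \<Rightarrow> real^'k) \<Rightarrow> (real^'k \<Rightarrow> real^'k)
    \<Rightarrow> (real^'k \<Rightarrow> real) \<Rightarrow> real^'k \<Rightarrow> real" where
  "Lop V V0 g p = (\<Sum>i\<in>UNIV. vf_app (V i) (vf_app (V i) g) p) + vf_app V0 g p"

definition GammaL_bil where
  "GammaL_bil V V0 f g p =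
     (Lop V V0 (\<lambda>q. f q * g q) p - f p * Lop V V0 g p - g p * Lop V V0 f p) / 2"

definition GammaL where
  "GammaL V V0 f p = (Lop V V0 (\<lambda>q. (f q)\<^sup>2) p - 2 * f p * Lop V V0 f p) / 2"

definition Gamma2L where
  "Gamma2L V V0 f p =
     (Lop V V0 (GammaL V V0 f) p - 2 * GammaL_bil V V0 f (Lop V V0 f) p) / 2"

definition pvf_app :: "(real^'k \<Rightarrow> real^'k) \<Rightarrow> ((real^'k) \<times> (real^'k) \<Rightarrow> real)
    \<Rightarrow> (real^'k) \<times> (real^'k) \<Rightarrow> real" where
  "pvf_app V g z = frechet_derivative g (at z) (V (fst z), 0)"

definition dxi :: "'k::finite \<Rightarrow> ((real^'k) \<times> (real^'k) \<Rightarrow> real) \<Rightarrow> (real^'k) \<times> (real^'k) \<Rightarrow> real" where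
  "dxi i g z = frechet_derivative g (at z) (0, axis i 1)"

definition calL :: "('k::finite \<Rightarrow> real^'k \<Rightarrow> real^'k) \<Rightarrow> (real^'k \<Rightarrow> real^'k)
    \<Rightarrow> (real^'k \<Rightarrow> real^'k) \<Rightarrow> ((real^'k) \<times> (real^'k) \<Rightarrow> real) \<Rightarrow> (real^'k) \<times> (real^'k) \<Rightarrow> real" where
  "calL V V0 \<sigma> g z = (\<Sum>i\<in>UNIV. pvf_app (V i) (pvf_app (V i) g) z) + pvf_app V0 g z
      + (\<Sum>i\<in>UNIV. \<sigma> (fst z) $ i * dxi i g z)"

definition Gamma where
  "Gamma V V0 \<sigma> f z = (calL V V0 \<sigma> (\<lambda>w. (f w)\<^sup>2) z - 2 * f z * calL V V0 \<sigma> f z) / 2"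

text \<open>Bilinear carre du champ of calL in its first-order form:
  for smooth f, g this equals (calL(fg) - f calL g - g calL f)/2; it is used with
  g = calL f, which is only C^1 in p when sigma is C^1.\<close>
definition Gamma_bil where
  "Gamma_bil V f g z = (\<Sum>i\<in>UNIV. pvf_app (V i) f z * pvf_app (V i) g z)"

definition Gamma2 where
  "Gamma2 V V0 \<sigma> f z =
     (calL V V0 \<sigma> (Gamma V V0 \<sigma> f) z - 2 * Gamma_bil V f (calL V V0 \<sigma> f) z) / 2"

definition GammaZ where
  "GammaZ f z = (\<Sum>i\<in>UNIV. (dxi i f z)\<^sup>2)"

definition GammaZ_bil where
  "GammaZ_bil f g z = (\<Sum>i\<in>UNIV. dxi i f z * dxi i g z)"

definition Gamma2Z where
  "Gamma2Z V V0 \<sigma> f z =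
     (calL V V0 \<sigma> (GammaZ f) z - 2 * GammaZ_bil f (calL V V0 \<sigma> f) z) / 2"

definition sigma_grad_norm :: "('k::finite \<Rightarrow> real^'k \<Rightarrow> real^'k) \<Rightarrow> (real^'k \<Rightarrow> real^'k) \<Rightarrow> real^'k \<Rightarrow> real" where
  "sigma_grad_norm V \<sigma> p =
     sqrt (\<Sum>i\<in>UNIV. \<Sum>j\<in>UNIV. (vf_app (V i) (\<lambda>q. \<sigma> q $ j) p)\<^sup>2)"

end

theory Submission
  imports Defs
begin


lemma dd_works: "g differentiable (at x) \<Longrightarrow> (g has_derivative (\<lambda>v. dderiv v g x)) (at x)"
  unfolding dderiv_def using frechet_derivative_works by auto

lemma dd_eq: "(g has_derivative g') (at x) \<Longrightarrow> dderiv v g x = g' v"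
  unfolding dderiv_def using frechet_derivative_at by metis

lemma dd_lin: "g differentiable (at x) \<Longrightarrow> linear (\<lambda>v. dderiv v g x)"
  unfolding dderiv_def using linear_frechet_derivative by auto

lemma dd_add: "g differentiable (at x) \<Longrightarrow> h differentiable (at x) \<Longrightarrow>
   dderiv v (\<lambda>y. g y + h y) x = dderiv v g x + dderiv v h x"
  by (rule dd_eq[where g'="\<lambda>v. dderiv v g x + dderiv v h x", simplified])
     (intro has_derivative_add dd_works)

lemma dd_diff: "g differentiable (at x) \<Longrightarrow> h differentiable (at x) \<Longrightarrow>
   dderiv v (\<lambda>y. g y - h y) x = dderiv v g x - dderiv v h x"
  by (rule dd_eq[where g'="\<lambda>v. dderiv v g x - dderiv v h x", simplified])
     (intro has_derivative_diff dd_works)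

lemma dd_mult: "(g::'a::real_normed_vector\<Rightarrow>real) differentiable (at x) \<Longrightarrow> h differentiable (at x) \<Longrightarrow>
   dderiv v (\<lambda>y. g y * h y) x = g x * dderiv v h x + dderiv v g x * h x"
  by (rule dd_eq[where g'="\<lambda>v. g x * dderiv v h x + dderiv v g x * h x", simplified])
     (intro has_derivative_mult dd_works)

lemma dd_const[simp]: "dderiv v (\<lambda>y. c) x = 0"
  by (rule dd_eq[where g'="\<lambda>v. 0", simplified]) (rule has_derivative_const)

lemma dd_sum: "finite I \<Longrightarrow> (\<And>i. i \<in> I \<Longrightarrow> f i differentiable (at x)) \<Longrightarrow>
   dderiv v (\<lambda>y. \<Sum>i\<in>I. f i y) x = (\<Sum>i\<in>I. dderiv v (f i) x)"
  by (rule dd_eq[where g'="\<lambda>v. \<Sum>i\<in>I. dderiv v (f i) x", simplified])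
     (intro has_derivative_sum dd_works)

lemma dd_scale: "g differentiable (at x) \<Longrightarrow> dderiv (c *\<^sub>R v) g x = c * dderiv v g x"
  using linear_scale[OF dd_lin] by auto

lemma dd_vsum: "g differentiable (at x) \<Longrightarrow>
   dderiv (\<Sum>b\<in>B. c b *\<^sub>R b) g x = (\<Sum>b\<in>B. c b * dderiv b g x)"
  using linear_sum[OF dd_lin, of g x "\<lambda>b. c b *\<^sub>R b" B] by (simp add: dd_scale)

lemma dd_vadd: "g differentiable (at x) \<Longrightarrow> dderiv (u + w) g x = dderiv u g x + dderiv w g x"
  using linear_add[OF dd_lin] by auto

lemma dd_basis: "(g::'a::euclidean_space \<Rightarrow> real) differentiable (at x) \<Longrightarrow>
   dderiv u g x = (\<Sum>b\<in>Basis. (u \<bullet> b) * dderiv b g x)"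
  using dd_vsum[of g x "\<lambda>b. u \<bullet> b" Basis] by (simp add: euclidean_representation)

lemma dd_fst: "c differentiable (at (fst z)) \<Longrightarrow> dderiv v (\<lambda>z. c (fst z)) z = dderiv (fst v) c (fst z)"
proof -
  assume c: "c differentiable (at (fst z))"
  have "((\<lambda>z. c (fst z)) has_derivative (\<lambda>v. dderiv (fst v) c (fst z))) (at z)"
    using has_derivative_compose[OF has_derivative_fst[OF has_derivative_ident] dd_works[OF c]] by simp
  then show ?thesis by (rule dd_eq)
qed

lemma diff_fst: "(c::'a::real_normed_vector\<Rightarrow>real) differentiable (at (fst z)) \<Longrightarrow> (\<lambda>z. c (fst z)) differentiable (at z)"
proof -
  assume c: "c differentiable (at (fst z))"
  show ?thesis
  using has_derivative_compose[OF has_derivative_fst[OF has_derivative_ident] dd_works[OF c]]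
  unfolding differentiable_def by blast
qed

lemma hd_lift: "F differentiable (at (p, \<xi>)) \<Longrightarrow>
   ((\<lambda>p. F (p, \<xi>)) has_derivative (\<lambda>u. dderiv (u, 0) F (p, \<xi>))) (at p)"
proof -
  assume c: "F differentiable (at (p, \<xi>))"
  have d: "((\<lambda>p. (p, \<xi>)) has_derivative (\<lambda>u. (u, 0))) (at p)"
    by (intro has_derivative_Pair has_derivative_ident has_derivative_const)
  from has_derivative_compose[OF d dd_works[OF c]] show ?thesis by simp
qed

lemma dd_lift: "F differentiable (at (p, \<xi>)) \<Longrightarrow> dderiv u (\<lambda>p. F (p, \<xi>)) p = dderiv (u, 0) F (p, \<xi>)"
proof -
  assume a: "F differentiable (at (p, \<xi>))"
  show ?thesis using dd_eq[OF hd_lift[OF a]] by simp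
qed

lemma diff_lift: "(F::'a::real_normed_vector\<times>'b::real_normed_vector\<Rightarrow>real) differentiable (at (p, \<xi>)) \<Longrightarrow> (\<lambda>p. F (p, \<xi>)) differentiable (at p)"
  using hd_lift unfolding differentiable_def by blast

lemma smooth_diff: "smooth g \<Longrightarrow> g differentiable (at x)"
  unfolding smooth_def by (metis foldr_Nil id_apply)

lemma smooth_dd: "smooth g \<Longrightarrow> smooth (dderiv v g)"
  unfolding smooth_def by (metis foldr_append foldr_Cons foldr_Nil comp_id id_apply)

definition smn :: "nat \<Rightarrow> ('a::real_normed_vector \<Rightarrow> real) \<Rightarrow> bool" where
  "smn n g \<longleftrightarrow> (\<forall>vs. length vs \<le> n \<longrightarrow> (\<forall>x. foldr dderiv vs g differentiable (at x)))"

lemma smooth_smn: "smooth g \<longleftrightarrow> (\<forall>n. smn n g)"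
  unfolding smooth_def smn_def by auto

lemma smn_add_eq: "smn n A \<Longrightarrow> smn n B \<Longrightarrow> length ws \<le> n \<Longrightarrow>
   foldr dderiv ws (\<lambda>x. A x + B x) = (\<lambda>x. foldr dderiv ws A x + foldr dderiv ws B x)"
proof (induction ws)
  case Nil then show ?case by simp
next
  case (Cons v ws)
  then have IH: "foldr dderiv ws (\<lambda>x. A x + B x) = (\<lambda>x. foldr dderiv ws A x + foldr dderiv ws B x)" by simp
  have "\<forall>x. foldr dderiv ws A differentiable (at x)" "\<forall>x. foldr dderiv ws B differentiable (at x)"
    using Cons.prems unfolding smn_def by auto
  then show ?case using IH by (auto intro!: ext dd_add)
qed

lemma smn_add: "smn n A \<Longrightarrow> smn n B \<Longrightarrow> smn n (\<lambda>x. A x + B x)"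
  unfolding smn_def[of n "\<lambda>x. A x + B x"]
proof (intro allI impI)
  fix vs :: "'a list" and x assume a: "smn n A" "smn n B" and l: "length vs \<le> n"
  have "foldr dderiv vs (\<lambda>x. A x + B x) = (\<lambda>x. foldr dderiv vs A x + foldr dderiv vs B x)"
    using smn_add_eq[OF a l] .
  moreover have "foldr dderiv vs A differentiable (at x)" "foldr dderiv vs B differentiable (at x)"
    using a l unfolding smn_def by auto
  ultimately show "foldr dderiv vs (\<lambda>x. A x + B x) differentiable (at x)" by (simp add: differentiable_add)
qed

lemma smooth_add: "smooth A \<Longrightarrow> smooth B \<Longrightarrow> smooth (\<lambda>x. A x + B x)"
  using smn_add smooth_smn by metis

lemma foldr_const: "\<exists>c'. foldr dderiv vs (\<lambda>x. c) = (\<lambda>x. c')"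
  by (induction vs) (auto simp: dderiv_def[symmetric])

lemma smooth_const: "smooth (\<lambda>x. c)"
  unfolding smooth_def
proof (intro allI)
  fix vs :: "'a list" and x
  obtain c' where "foldr dderiv vs (\<lambda>x. c) = (\<lambda>x. c')" using foldr_const by blast
  then show "foldr dderiv vs (\<lambda>x. c) differentiable (at x)" by simp
qed

lemma smooth_mult_aux: "\<forall>g h. smooth g \<longrightarrow> smooth h \<longrightarrow> smn n (\<lambda>x. (g x::real) * h x)"
proof (induction n)
  case 0
  then show ?case unfolding smn_def by (auto intro: differentiable_mult smooth_diff)
next
  case (Suc n)
  show ?case
  proof (intro allI impI)
    fix g h :: "'a \<Rightarrow> real" assume g: "smooth g" and h: "smooth h"
    show "smn (Suc n) (\<lambda>x. g x * h x)"
      unfolding smn_def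
    proof (intro allI impI)
      fix vs :: "'a list" and x assume len: "length vs \<le> Suc n"
      show "foldr dderiv vs (\<lambda>x. g x * h x) differentiable (at x)"
      proof (cases vs rule: rev_exhaust)
        case Nil then show ?thesis using g h by (auto intro: differentiable_mult smooth_diff)
      next
        case (snoc ws v)
        have eq: "dderiv v (\<lambda>x. g x * h x) = (\<lambda>x. g x * dderiv v h x + dderiv v g x * h x)"
          using g h by (auto intro!: ext dd_mult smooth_diff)
        have A: "smn n (\<lambda>x. g x * dderiv v h x)" using Suc.IH g h smooth_dd by blast
        have B: "smn n (\<lambda>x. dderiv v g x * h x)" using Suc.IH g h smooth_dd by blast
        have "smn n (\<lambda>x. g x * dderiv v h x + dderiv v g x * h x)" by (rule smn_add[OF A B])
        moreover have "length ws \<le> n" using len snoc by simp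
        ultimately show ?thesis using snoc eq unfolding smn_def by simp
      qed
    qed
  qed
qed

lemma smooth_mult: "smooth g \<Longrightarrow> smooth h \<Longrightarrow> smooth (\<lambda>x. (g x::real) * h x)"
  using smooth_mult_aux smooth_smn by blast

lemma smooth_sum: "finite I \<Longrightarrow> (\<And>i. i \<in> I \<Longrightarrow> smooth (f i)) \<Longrightarrow> smooth (\<lambda>x. \<Sum>i\<in>I. f i x)"
  by (induction I rule: finite_induct) (auto intro: smooth_const smooth_add)

lemma smooth_fst: "smooth c \<Longrightarrow> smooth (\<lambda>z::('a::real_normed_vector \<times> 'b::real_normed_vector). c (fst z))"
proof -
  assume c: "smooth c"
  have eq: "foldr dderiv vs (\<lambda>z::'a \<times> 'b. c (fst z)) = (\<lambda>z. foldr dderiv (map fst vs) c (fst z))" for vs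
  proof (induction vs)
    case (Cons v vs)
    have "smooth (foldr dderiv (map fst vs) c)" using c unfolding smooth_def
      by (metis foldr_append)
    then show ?case using Cons by (auto intro!: ext dd_fst smooth_diff)
  qed simp
  show ?thesis unfolding smooth_def eq using c unfolding smooth_def by (blast intro: diff_fst)
qed

lemma smooth_lift: "smooth F \<Longrightarrow> smooth (\<lambda>p. F (p, \<xi>))"
proof -
  assume c: "smooth F"
  have eq: "foldr dderiv vs (\<lambda>p. F (p, \<xi>)) = (\<lambda>p. foldr dderiv (map (\<lambda>u. (u,0)) vs) F (p, \<xi>))" for vs
  proof (induction vs)
    case (Cons v vs)
    have "smooth (foldr dderiv (map (\<lambda>u. (u,0)) vs) F)" using c unfolding smooth_def
      by (metis foldr_append)
    then show ?case using Cons by (auto intro!: ext dd_lift smooth_diff)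
  qed simp
  show ?thesis unfolding smooth_def
  proof (intro allI)
    fix vs x
    have "foldr dderiv (map (\<lambda>u. (u,0)) vs) F differentiable (at (x, \<xi>))" using c unfolding smooth_def by blast
    then show "foldr dderiv vs (\<lambda>p. F (p, \<xi>)) differentiable (at x)" unfolding eq by (rule diff_lift)
  qed
qed



definition app :: "('a::real_normed_vector \<Rightarrow> 'a) \<Rightarrow> ('a \<Rightarrow> real) \<Rightarrow> 'a \<Rightarrow> real" where
  "app W g x = dderiv (W x) g x"

definition coef_smooth :: "('a::euclidean_space \<Rightarrow> 'a) \<Rightarrow> bool" where
  "coef_smooth W \<longleftrightarrow> (\<forall>b\<in>Basis. smooth (\<lambda>x. W x \<bullet> b))"

lemma app_basis: "(g::'a::euclidean_space \<Rightarrow> real) differentiable (at x) \<Longrightarrow>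
   app W g x = (\<Sum>b\<in>Basis. (W x \<bullet> b) * dderiv b g x)"
  unfolding app_def by (rule dd_basis)

lemma smooth_app: "smooth g \<Longrightarrow> coef_smooth W \<Longrightarrow> smooth (app W g)"
proof -
  assume g: "smooth g" and W: "coef_smooth W"
  have "app W g = (\<lambda>x. \<Sum>b\<in>Basis. (W x \<bullet> b) * dderiv b g x)"
    using g by (auto intro!: ext app_basis smooth_diff)
  moreover have "smooth (\<lambda>x. \<Sum>b\<in>Basis. (W x \<bullet> b) * dderiv b g x)"
    using W g unfolding coef_smooth_def
    by (intro smooth_sum smooth_mult smooth_dd) auto
  ultimately show ?thesis by simp
qed

lemma deriv_line:
  fixes g :: "'a::real_normed_vector \<Rightarrow> real"
  assumes "g differentiable (at (a + s *\<^sub>R v))"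
  shows "((\<lambda>s. g (a + s *\<^sub>R v)) has_field_derivative dderiv v g (a + s *\<^sub>R v)) (at s)"
proof -
  have l: "((\<lambda>s. a + s *\<^sub>R v) has_derivative (\<lambda>r. r *\<^sub>R v)) (at s)"
    by (auto intro!: derivative_eq_intros)
  have "((\<lambda>s. g (a + s *\<^sub>R v)) has_derivative (\<lambda>r. dderiv (r *\<^sub>R v) g (a + s *\<^sub>R v))) (at s)"
    using has_derivative_compose[OF l dd_works[OF assms]] by simp
  moreover have "(\<lambda>r. dderiv (r *\<^sub>R v) g (a + s *\<^sub>R v)) = (*) (dderiv v g (a + s *\<^sub>R v))"
    using dd_scale[OF assms] by (auto simp: mult.commute)
  ultimately show ?thesis unfolding has_field_derivative_def by simp
qed

lemma mvt_sq:
  fixes h :: "'a::real_normed_vector \<Rightarrow> real"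
  assumes h: "smooth h" and t: "t > 0"
  shows "\<exists>y. norm (y - x) \<le> t * (norm u + norm w) \<and>
    h (x + t *\<^sub>R u + t *\<^sub>R w) - h (x + t *\<^sub>R u) - h (x + t *\<^sub>R w) + h x
      = t * t * dderiv u (dderiv w h) y"
proof -
  define \<phi> where "\<phi> = (\<lambda>s. h (x + t *\<^sub>R u + s *\<^sub>R w) - h (x + s *\<^sub>R w))"
  have D1: "DERIV \<phi> s :> dderiv w h (x + t *\<^sub>R u + s *\<^sub>R w) - dderiv w h (x + s *\<^sub>R w)" for s
    unfolding \<phi>_def by (intro DERIV_diff deriv_line smooth_diff h)
  obtain s1 where s1: "0 < s1" "s1 < t"
    "\<phi> t - \<phi> 0 = (t - 0) * (dderiv w h (x + t *\<^sub>R u + s1 *\<^sub>R w) - dderiv w h (x + s1 *\<^sub>R w))"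
    using MVT2[OF t, of \<phi> "\<lambda>s. dderiv w h (x + t *\<^sub>R u + s *\<^sub>R w) - dderiv w h (x + s *\<^sub>R w)"] D1 by blast
  define \<psi> where "\<psi> = (\<lambda>r. dderiv w h (x + s1 *\<^sub>R w + r *\<^sub>R u))"
  have D2: "DERIV \<psi> r :> dderiv u (dderiv w h) (x + s1 *\<^sub>R w + r *\<^sub>R u)" for r
    unfolding \<psi>_def by (intro deriv_line smooth_diff smooth_dd h)
  obtain r1 where r1: "0 < r1" "r1 < t"
    "\<psi> t - \<psi> 0 = (t - 0) * dderiv u (dderiv w h) (x + s1 *\<^sub>R w + r1 *\<^sub>R u)"
    using MVT2[OF t, of \<psi> "\<lambda>r. dderiv u (dderiv w h) (x + s1 *\<^sub>R w + r *\<^sub>R u)"] D2 by blast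
  define y where "y = x + s1 *\<^sub>R w + r1 *\<^sub>R u"
  have yx: "y - x = s1 *\<^sub>R w + r1 *\<^sub>R u" unfolding y_def by simp
  have "norm (y - x) \<le> norm (s1 *\<^sub>R w) + norm (r1 *\<^sub>R u)"
    unfolding yx by (rule norm_triangle_ineq)
  also have "\<dots> = s1 * norm w + r1 * norm u" using s1 r1 by simp
  also have "\<dots> \<le> t * norm w + t * norm u"
    using s1 r1 by (intro add_mono mult_right_mono) auto
  finally have ny: "norm (y - x) \<le> t * (norm u + norm w)" by (simp add: algebra_simps)
  have "\<psi> t = dderiv w h (x + t *\<^sub>R u + s1 *\<^sub>R w)" "\<psi> 0 = dderiv w h (x + s1 *\<^sub>R w)"
    unfolding \<psi>_def by (simp_all add: algebra_simps)
  then have "\<phi> t - \<phi> 0 = t * t * dderiv u (dderiv w h) y"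
    using s1(3) r1(3) unfolding y_def by simp
  moreover have "\<phi> t - \<phi> 0 = h (x + t *\<^sub>R u + t *\<^sub>R w) - h (x + t *\<^sub>R u) - h (x + t *\<^sub>R w) + h x"
    unfolding \<phi>_def by simp
  ultimately show ?thesis using ny by metis
qed

lemma abs_contra:
  fixes a b A B :: real
  assumes "\<bar>a - A\<bar> < \<bar>A - B\<bar> / 2" "\<bar>b - B\<bar> < \<bar>A - B\<bar> / 2" "a = b"
  shows False
  using assms by (cases "A \<le> B") (auto simp: abs_if split: if_splits)

lemma dd_symm:
  fixes h :: "'a::real_normed_vector \<Rightarrow> real"
  assumes h: "smooth h"
  shows "dderiv u (dderiv w h) x = dderiv w (dderiv u h) x"
proof (rule ccontr)
  let ?A = "dderiv u (dderiv w h) x" and ?B = "dderiv w (dderiv u h) x"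
  assume ne: "?A \<noteq> ?B"
  define e where "e = \<bar>?A - ?B\<bar> / 2"
  have e: "e > 0" using ne unfolding e_def by simp
  have c1: "continuous (at x) (dderiv u (dderiv w h))"
    by (intro differentiable_imp_continuous_within smooth_diff smooth_dd h)
  have c2: "continuous (at x) (dderiv w (dderiv u h))"
    by (intro differentiable_imp_continuous_within smooth_diff smooth_dd h)
  obtain d1 where d1: "d1 > 0" "\<And>y. dist y x < d1 \<Longrightarrow> dist (dderiv u (dderiv w h) y) ?A < e"
    using c1 e unfolding continuous_at_eps_delta by blast
  obtain d2 where d2: "d2 > 0" "\<And>y. dist y x < d2 \<Longrightarrow> dist (dderiv w (dderiv u h) y) ?B < e"
    using c2 e unfolding continuous_at_eps_delta by blast
  define t where "t = min d1 d2 / (2 * (norm u + norm w + 1))"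
  have npos: "norm u + norm w + 1 > 0" by (simp add: add_nonneg_pos)
  have t: "t > 0" unfolding t_def using d1 d2 npos by simp
  have tb: "t * (norm u + norm w) < min d1 d2"
  proof -
    have "t * (norm u + norm w) \<le> t * (norm u + norm w + 1)" using t by simp
    also have "\<dots> = min d1 d2 / 2" unfolding t_def using npos by (simp add: field_simps)
    also have "\<dots> < min d1 d2" using d1(1) d2(1) by (simp add: min_def)
    finally show ?thesis .
  qed
  obtain y1 where y1: "norm (y1 - x) \<le> t * (norm u + norm w)"
    "h (x + t *\<^sub>R u + t *\<^sub>R w) - h (x + t *\<^sub>R u) - h (x + t *\<^sub>R w) + h x
      = t * t * dderiv u (dderiv w h) y1"
    using mvt_sq[OF h t, of x u w] by blast
  obtain y2 where y2: "norm (y2 - x) \<le> t * (norm w + norm u)"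
    "h (x + t *\<^sub>R w + t *\<^sub>R u) - h (x + t *\<^sub>R w) - h (x + t *\<^sub>R u) + h x
      = t * t * dderiv w (dderiv u h) y2"
    using mvt_sq[OF h t, of x w u] by blast
  have "t * t * dderiv u (dderiv w h) y1 = t * t * dderiv w (dderiv u h) y2"
    using y1(2) y2(2) by (simp add: algebra_simps)
  then have eq: "dderiv u (dderiv w h) y1 = dderiv w (dderiv u h) y2" using t by simp
  have "dist y1 x < d1" using y1(1) tb by (simp add: dist_norm)
  then have a: "\<bar>dderiv u (dderiv w h) y1 - ?A\<bar> < e" using d1 by (simp add: dist_real_def)
  have "dist y2 x < d2" using y2(1) tb by (simp add: dist_norm add.commute)
  then have b: "\<bar>dderiv w (dderiv u h) y2 - ?B\<bar> < e" using d2 by (simp add: dist_real_def)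
  show False using abs_contra[OF a[unfolded e_def] b[unfolded e_def] eq] .
qed



definition Lg :: "('i::finite \<Rightarrow> 'a::real_normed_vector \<Rightarrow> 'a) \<Rightarrow> ('a \<Rightarrow> 'a) \<Rightarrow> ('a \<Rightarrow> real) \<Rightarrow> 'a \<Rightarrow> real" where
  "Lg W W0 g x = (\<Sum>i\<in>UNIV. app (W i) (app (W i) g) x) + app W0 g x"

lemma app_add: "g differentiable (at x) \<Longrightarrow> h differentiable (at x) \<Longrightarrow>
   app W (\<lambda>y. g y + h y) x = app W g x + app W h x"
  unfolding app_def by (rule dd_add)

lemma app_mult: "(g::'a::real_normed_vector\<Rightarrow>real) differentiable (at x) \<Longrightarrow> h differentiable (at x) \<Longrightarrow>
   app W (\<lambda>y. g y * h y) x = g x * app W h x + app W g x * h x"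
  unfolding app_def by (rule dd_mult)

lemma app_sum: "finite I \<Longrightarrow> (\<And>i. i \<in> I \<Longrightarrow> f i differentiable (at x)) \<Longrightarrow>
   app W (\<lambda>y. \<Sum>i\<in>I. f i y) x = (\<Sum>i\<in>I. app W (f i) x)"
  unfolding app_def by (rule dd_sum)

lemma app_mult_fun: "(\<And>x. (g::'a::real_normed_vector\<Rightarrow>real) differentiable (at x)) \<Longrightarrow> (\<And>x. h differentiable (at x)) \<Longrightarrow>
   app W (\<lambda>y. g y * h y) = (\<lambda>x. g x * app W h x + app W g x * h x)"
  using app_mult by blast

definition D2 :: "('a::real_normed_vector \<Rightarrow> 'a) \<Rightarrow> ('a \<Rightarrow> real) \<Rightarrow> bool" where
  "D2 W g \<longleftrightarrow> (\<forall>x. g differentiable (at x)) \<and> (\<forall>x. app W g differentiable (at x))"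

lemma app2_mult:
  fixes g h :: "'a::real_normed_vector \<Rightarrow> real"
  assumes "D2 W g" "D2 W h"
  shows "app W (app W (\<lambda>y. g y * h y)) x =
     g x * app W (app W h) x + 2 * (app W g x * app W h x) + app W (app W g) x * h x"
proof -
  have d: "\<And>x. g differentiable (at x)" "\<And>x. h differentiable (at x)"
      "\<And>x. app W g differentiable (at x)" "\<And>x. app W h differentiable (at x)"
    using assms unfolding D2_def by auto
  have "app W (app W (\<lambda>y. g y * h y)) x = app W (\<lambda>x. g x * app W h x + app W g x * h x) x"
    by (simp add: app_mult_fun[OF d(1,2)])
  also have "\<dots> = app W (\<lambda>x. g x * app W h x) x + app W (\<lambda>x. app W g x * h x) x"
    by (intro app_add differentiable_mult d)
  also have "\<dots> = g x * app W (app W h) x + 2 * (app W g x * app W h x) + app W (app W g) x * h x"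
    by (simp add: app_mult d algebra_simps)
  finally show ?thesis .
qed

lemma Lg_mult:
  fixes g h :: "'a::real_normed_vector \<Rightarrow> real"
  assumes "\<forall>i. D2 (W i) g" "\<forall>i. D2 (W i) h" "\<forall>x. g differentiable (at x)" "\<forall>x. h differentiable (at x)"
  shows "Lg W W0 (\<lambda>y. g y * h y) x =
     g x * Lg W W0 h x + h x * Lg W W0 g x + 2 * (\<Sum>i\<in>UNIV. app (W i) g x * app (W i) h x)"
  unfolding Lg_def using assms
  by (simp add: app2_mult app_mult sum.distrib sum_distrib_left algebra_simps)

lemma Lg_add:
  fixes g h :: "'a::real_normed_vector \<Rightarrow> real"
  assumes "\<forall>i. D2 (W i) g" "\<forall>i. D2 (W i) h" "\<forall>x. g differentiable (at x)" "\<forall>x. h differentiable (at x)"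
  shows "Lg W W0 (\<lambda>y. g y + h y) x = Lg W W0 g x + Lg W W0 h x"
proof -
  have a: "app (W i) (\<lambda>y. g y + h y) = (\<lambda>y. app (W i) g y + app (W i) h y)" for i
    using assms by (auto intro!: ext app_add)
  have b: "app (W i) (app (W i) (\<lambda>y. g y + h y)) x = app (W i) (app (W i) g) x + app (W i) (app (W i) h) x" for i
    unfolding a using assms unfolding D2_def by (auto intro!: app_add)
  show ?thesis unfolding Lg_def using assms by (simp add: b app_add sum.distrib)
qed

lemma Lg_sum:
  fixes g :: "'j \<Rightarrow> 'a::real_normed_vector \<Rightarrow> real"
  assumes "finite J" "\<forall>j\<in>J. \<forall>i. D2 (W i) (g j)" "\<forall>j\<in>J. \<forall>x. g j differentiable (at x)"
  shows "Lg W W0 (\<lambda>y. \<Sum>j\<in>J. g j y) x = (\<Sum>j\<in>J. Lg W W0 (g j) x)"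
proof -
  have a: "app (W i) (\<lambda>y. \<Sum>j\<in>J. g j y) = (\<lambda>y. \<Sum>j\<in>J. app (W i) (g j) y)" for i
    using assms by (auto intro!: ext app_sum)
  have b: "app (W i) (app (W i) (\<lambda>y. \<Sum>j\<in>J. g j y)) x = (\<Sum>j\<in>J. app (W i) (app (W i) (g j)) x)" for i
    unfolding a using assms unfolding D2_def by (auto intro!: app_sum)
  show ?thesis unfolding Lg_def using assms by (simp add: b app_sum sum.distrib sum.swap[of _ UNIV])
qed

lemma dd_app_comm:
  fixes h :: "'a::euclidean_space \<Rightarrow> real"
  assumes h: "smooth h" and W: "coef_smooth W"
    and W0: "\<forall>b\<in>Basis. \<forall>y. dderiv e (\<lambda>y. W y \<bullet> b) y = 0"
  shows "dderiv e (app W h) x = app W (dderiv e h) x"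
proof -
  have "app W h = (\<lambda>x. \<Sum>b\<in>Basis. (W x \<bullet> b) * dderiv b h x)"
    using h by (auto intro!: ext app_basis smooth_diff)
  then have "dderiv e (app W h) x = dderiv e (\<lambda>x. \<Sum>b\<in>Basis. (W x \<bullet> b) * dderiv b h x) x" by simp
  also have "\<dots> = (\<Sum>b\<in>Basis. dderiv e (\<lambda>x. (W x \<bullet> b) * dderiv b h x) x)"
    using W h unfolding coef_smooth_def
    by (intro dd_sum) (auto intro!: smooth_diff smooth_mult smooth_dd)
  also have "\<dots> = (\<Sum>b\<in>Basis. (W x \<bullet> b) * dderiv e (dderiv b h) x)"
    using W h W0 unfolding coef_smooth_def
    by (intro sum.cong) (auto simp: dd_mult smooth_diff smooth_dd)
  also have "\<dots> = (\<Sum>b\<in>Basis. (W x \<bullet> b) * dderiv b (dderiv e h) x)"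
    using dd_symm[OF h] by simp
  also have "\<dots> = app W (dderiv e h) x"
    using h by (simp add: app_basis smooth_diff smooth_dd)
  finally show ?thesis .
qed

lemma dd_app_comm_fun:
  fixes h :: "'a::euclidean_space \<Rightarrow> real"
  assumes h: "smooth h" and W: "coef_smooth W"
    and W0: "\<forall>b\<in>Basis. \<forall>y. dderiv e (\<lambda>y. W y \<bullet> b) y = 0"
  shows "dderiv e (app W h) = app W (dderiv e h)"
  using dd_app_comm[OF assms] by auto

lemma dd_Lg_comm:
  fixes h :: "'a::euclidean_space \<Rightarrow> real"
  assumes h: "smooth h" and W: "\<forall>i. coef_smooth (W i)" "coef_smooth W0"
    and Wz: "\<forall>i. \<forall>b\<in>Basis. \<forall>y. dderiv e (\<lambda>y. W i y \<bullet> b) y = 0"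
    and W0z: "\<forall>b\<in>Basis. \<forall>y. dderiv e (\<lambda>y. W0 y \<bullet> b) y = 0"
  shows "dderiv e (Lg W W0 h) x = Lg W W0 (dderiv e h) x"
proof -
  have s: "smooth (app (W i) (app (W i) h))" "smooth (app W0 h)" "smooth (app (W i) h)" for i
    using h W by (auto intro!: smooth_app)
  have "dderiv e (Lg W W0 h) x =
      (\<Sum>i\<in>UNIV. dderiv e (app (W i) (app (W i) h)) x) + dderiv e (app W0 h) x"
    unfolding Lg_def[abs_def] using s
    by (simp add: dd_add dd_sum smooth_diff differentiable_sum)
  also have "\<dots> = Lg W W0 (dderiv e h) x"
    unfolding Lg_def using s h W Wz W0z
    by (simp add: dd_app_comm dd_app_comm_fun)
  finally show ?thesis .
qed



definition PW :: "(real^'k \<Rightarrow> real^'k) \<Rightarrow> (real^'k) \<times> (real^'k) \<Rightarrow> (real^'k) \<times> (real^'k)" where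
  "PW V z = (V (fst z), 0)"

definition ez :: "'k::finite \<Rightarrow> (real^'k) \<times> (real^'k)" where
  "ez j = (0, axis j 1)"

lemma vf_eq: "vf_app V g = app V g"
  by (auto simp: vf_app_def app_def dderiv_def fun_eq_iff)
lemma pvf_eq: "pvf_app V g = app (PW V) g"
  by (auto simp: pvf_app_def app_def dderiv_def PW_def fun_eq_iff)
lemma dxi_eq: "dxi i g = dderiv (ez i) g"
  by (auto simp: dxi_def dderiv_def ez_def fun_eq_iff)
lemma Lop_eq: "Lop V V0 g = Lg V V0 g"
  by (auto simp: Lop_def Lg_def vf_eq fun_eq_iff)
lemma calL_eq: "calL V V0 \<sigma> g = (\<lambda>z. Lg (\<lambda>i. PW (V i)) (PW V0) g z + (\<Sum>i\<in>UNIV. \<sigma> (fst z) $ i * dderiv (ez i) g z))"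
  by (auto simp: calL_def Lg_def pvf_eq dxi_eq fun_eq_iff)

lemma smooth_inner: "smooth_vf V \<Longrightarrow> smooth (\<lambda>p. V p \<bullet> u)"
proof -
  assume V: "smooth_vf V"
  have "(\<lambda>p. V p \<bullet> u) = (\<lambda>p. \<Sum>i\<in>UNIV. V p $ i * u $ i)"
    by (auto simp: inner_vec_def fun_eq_iff)
  moreover have "smooth (\<lambda>p. \<Sum>i\<in>UNIV. V p $ i * u $ i)"
    using V unfolding smooth_vf_def by (intro smooth_sum smooth_mult smooth_const) auto
  ultimately show ?thesis by simp
qed

lemma coef_vf: "smooth_vf V \<Longrightarrow> coef_smooth V"
  unfolding coef_smooth_def using smooth_inner by blast

lemma PW_inner: "PW V z \<bullet> b = V (fst z) \<bullet> fst b"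
  by (simp add: PW_def inner_prod_def)

lemma coef_PW: "smooth_vf V \<Longrightarrow> coef_smooth (PW V)"
  unfolding coef_smooth_def PW_inner
  using smooth_fst[OF smooth_inner] by blast

lemma coef_ez: "coef_smooth (\<lambda>z. ez j)"
  unfolding coef_smooth_def by (simp add: smooth_const)

lemma dd_zero: "g differentiable (at x) \<Longrightarrow> dderiv 0 g x = 0"
  using dd_scale[of g x 0 0] by simp

lemma PW_ez: "smooth_vf V \<Longrightarrow> \<forall>b\<in>Basis. \<forall>y. dderiv (ez j) (\<lambda>y. PW V y \<bullet> b) y = 0"
proof (intro ballI allI)
  fix b :: "(real^'a) \<times> (real^'a)" and y
  assume V: "smooth_vf V"
  have "dderiv (ez j) (\<lambda>y. V (fst y) \<bullet> fst b) y = dderiv (fst (ez j)) (\<lambda>p. V p \<bullet> fst b) (fst y)"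
    by (rule dd_fst) (rule smooth_diff[OF smooth_inner[OF V]])
  also have "\<dots> = 0" by (simp add: ez_def dd_zero smooth_diff[OF smooth_inner[OF V]])
  finally show "dderiv (ez j) (\<lambda>y. PW V y \<bullet> b) y = 0" by (simp add: PW_inner)
qed

lemma app_lift: "(\<And>x. (F::(real^'k) \<times> (real^'k) \<Rightarrow> real) differentiable (at x)) \<Longrightarrow>
   app V (\<lambda>p. F (p, \<xi>)) = (\<lambda>p. app (PW V) F (p, \<xi>))"
  by (auto simp: app_def PW_def fun_eq_iff dd_lift)

lemma sm_D2: "smooth g \<Longrightarrow> coef_smooth W \<Longrightarrow> D2 W g"
  unfolding D2_def by (auto intro: smooth_diff smooth_app)

lemma smooth_Lg: "smooth g \<Longrightarrow> \<forall>i. coef_smooth (W i) \<Longrightarrow> coef_smooth W0 \<Longrightarrow> smooth (Lg W W0 g)"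
  unfolding Lg_def[abs_def] by (intro smooth_add smooth_sum smooth_app) auto

lemma Lg_lift:
  fixes F :: "(real^'k) \<times> (real^'k) \<Rightarrow> real"
  assumes "smooth F" "\<forall>i. smooth_vf (V i)"
  shows "Lg V V0 (\<lambda>p. F (p, \<xi>)) p = Lg (\<lambda>i. PW (V i)) (PW V0) F (p, \<xi>)"
proof -
  have s: "smooth (app (PW (V i)) F)" for i using assms by (auto intro: smooth_app coef_PW)
  show ?thesis unfolding Lg_def using assms s
    by (simp add: app_lift smooth_diff PW_def)
qed

lemma dd_sq: "(g::'a::real_normed_vector \<Rightarrow> real) differentiable (at x) \<Longrightarrow>
  dderiv v (\<lambda>y. (g y)\<^sup>2) x = 2 * g x * dderiv v g x"
  using dd_mult[of g x g v] by (simp add: power2_eq_square)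

lemma app_sq: "(g::'a::real_normed_vector \<Rightarrow> real) differentiable (at x) \<Longrightarrow>
  app W (\<lambda>y. (g y)\<^sup>2) x = 2 * g x * app W g x"
  unfolding app_def by (rule dd_sq)

lemma smooth_sq: "smooth g \<Longrightarrow> smooth (\<lambda>x. (g x)\<^sup>2)"
  using smooth_mult[of g g] by (simp add: power2_eq_square)

lemma C1_comp: "C1_map \<sigma> \<Longrightarrow> (\<lambda>q. \<sigma> q $ j) differentiable (at x)"
proof -
  assume "C1_map \<sigma>"
  then have "\<sigma> differentiable (at x)" unfolding C1_map_def by auto
  then obtain D where "(\<sigma> has_derivative D) (at x)" unfolding differentiable_def by auto
  from bounded_linear.has_derivative[OF bounded_linear_vec_nth this, of j]
  show ?thesis unfolding differentiable_def by blast
qed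

lemma GammaL_smooth:
  assumes "\<forall>i. smooth_vf (V i)" "smooth g"
  shows "GammaL V V0 g = (\<lambda>q. \<Sum>i\<in>UNIV. (app (V i) g q)\<^sup>2)"
proof
  fix q
  have "Lg V V0 (\<lambda>y. g y * g y) q = g q * Lg V V0 g q + g q * Lg V V0 g q + 2 * (\<Sum>i\<in>UNIV. app (V i) g q * app (V i) g q)"
    using assms by (intro Lg_mult) (auto intro: sm_D2 coef_vf smooth_diff)
  then show "GammaL V V0 g q = (\<Sum>i\<in>UNIV. (app (V i) g q)\<^sup>2)"
    unfolding GammaL_def Lop_eq by (simp add: power2_eq_square)
qed

lemma GammaL_bil_smooth:
  assumes "\<forall>i. smooth_vf (V i)" "smooth g" "smooth h"
  shows "GammaL_bil V V0 g h q = (\<Sum>i\<in>UNIV. app (V i) g q * app (V i) h q)"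
proof -
  have "Lg V V0 (\<lambda>y. g y * h y) q = g q * Lg V V0 h q + h q * Lg V V0 g q + 2 * (\<Sum>i\<in>UNIV. app (V i) g q * app (V i) h q)"
    using assms by (intro Lg_mult) (auto intro: sm_D2 coef_vf smooth_diff)
  then show ?thesis unfolding GammaL_bil_def Lop_eq by simp
qed



context
  fixes V :: "'k::finite \<Rightarrow> real^'k \<Rightarrow> real^'k" and V0 :: "real^'k \<Rightarrow> real^'k"
    and \<sigma> :: "real^'k \<Rightarrow> real^'k"
  assumes Vs: "\<forall>i. smooth_vf (V i)" and V0s: "smooth_vf V0" and \<sigma>C: "C1_map \<sigma>"
begin

abbreviation "LE \<equiv> Lg (\<lambda>i. PW (V i)) (PW V0)"
abbreviation "X i \<equiv> app (PW (V i))"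

lemma csX: "coef_smooth (PW (V i))" "coef_smooth (PW V0)" "\<forall>i. coef_smooth (PW (V i))"
  using Vs V0s by (auto intro: coef_PW)

lemma smX: "smooth g \<Longrightarrow> smooth (X i g)"
  using csX by (auto intro: smooth_app)

lemma smLE: "smooth g \<Longrightarrow> smooth (LE g)"
  using csX by (intro smooth_Lg) auto

lemma D2X: "smooth g \<Longrightarrow> \<forall>i. D2 (PW (V i)) g"
  using csX by (auto intro: sm_D2)

lemma Gamma_eq:
  assumes f: "smooth f"
  shows "Gamma V V0 \<sigma> f = (\<lambda>z. \<Sum>i\<in>UNIV. (X i f z)\<^sup>2)"
proof
  fix z
  have df: "\<forall>x. f differentiable (at x)" using f smooth_diff by blast
  have L: "LE (\<lambda>y. (f y)\<^sup>2) z = f z * LE f z + f z * LE f z + 2 * (\<Sum>i\<in>UNIV. X i f z * X i f z)"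
    unfolding power2_eq_square using f df by (intro Lg_mult D2X) auto
  have Z: "dderiv (ez i) (\<lambda>y. (f y)\<^sup>2) z = 2 * f z * dderiv (ez i) f z" for i
    by (rule dd_sq) (rule smooth_diff[OF f])
  have S: "(\<Sum>i\<in>UNIV. \<sigma> (fst z) $ i * (2 * f z * dderiv (ez i) f z)) = 2 * f z * (\<Sum>i\<in>UNIV. \<sigma> (fst z) $ i * dderiv (ez i) f z)"
    by (simp add: sum_distrib_left algebra_simps)
  show "Gamma V V0 \<sigma> f z = (\<Sum>i\<in>UNIV. (X i f z)\<^sup>2)"
    unfolding Gamma_def calL_eq using L Z S by (simp add: power2_eq_square algebra_simps)
qed

lemma GE_smooth: "smooth f \<Longrightarrow> smooth (\<lambda>z. \<Sum>i\<in>UNIV. (X i f z)\<^sup>2)"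
  by (intro smooth_sum smooth_sq smX) auto

lemma PWz: "\<forall>b\<in>Basis. \<forall>y. dderiv (ez j) (\<lambda>y. PW (V i) y \<bullet> b) y = 0"
  using PW_ez Vs by blast
lemma PWz_all: "\<forall>i. \<forall>b\<in>Basis. \<forall>y. dderiv (ez j) (\<lambda>y. PW (V i) y \<bullet> b) y = 0"
  using PW_ez Vs by blast
lemma PW0z: "\<forall>b\<in>Basis. \<forall>y. dderiv (ez j) (\<lambda>y. PW V0 y \<bullet> b) y = 0"
  using PW_ez V0s by blast

lemma ez_comm: "smooth h \<Longrightarrow> dderiv (ez j) (X i h) = X i (dderiv (ez j) h)"
  by (rule dd_app_comm_fun[OF _ csX(1) PWz])

lemma ez_LE_comm: "smooth h \<Longrightarrow> dderiv (ez j) (LE h) x = LE (dderiv (ez j) h) x"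
  by (rule dd_Lg_comm[OF _ csX(3) csX(2) PWz_all PW0z])

lemma sig_diff: "(\<lambda>z. \<sigma> (fst z) $ j) differentiable (at z)"
  using C1_comp[OF \<sigma>C] by (rule diff_fst)

lemma diff_sig_mult: "g differentiable (at z) \<Longrightarrow> (\<lambda>x. \<sigma> (fst x) $ i * g x) differentiable (at z)"
  by (rule differentiable_mult[OF sig_diff])

lemma calL_diff: "smooth f \<Longrightarrow> calL V V0 \<sigma> f differentiable (at z)"
  unfolding calL_eq
  by (intro differentiable_add differentiable_sum ballI diff_sig_mult
      smooth_diff smLE smooth_dd) auto

lemma X_sig: "X i (\<lambda>z. \<sigma> (fst z) $ j) z = vf_app (V i) (\<lambda>q. \<sigma> q $ j) (fst z)"
  unfolding app_def vf_app_def dderiv_def[symmetric] PW_def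
  by (subst dd_fst[OF C1_comp[OF \<sigma>C]]) simp

lemma ez_sig: "dderiv (ez l) (\<lambda>z. \<sigma> (fst z) $ j) z = 0"
  by (subst dd_fst[OF C1_comp[OF \<sigma>C]]) (simp add: ez_def dd_zero C1_comp[OF \<sigma>C])

lemma X_calL:
  assumes f: "smooth f"
  shows "X i (calL V V0 \<sigma> f) z = X i (LE f) z +
     (\<Sum>j\<in>UNIV. vf_app (V i) (\<lambda>q. \<sigma> q $ j) (fst z) * dderiv (ez j) f z + \<sigma> (fst z) $ j * X i (dderiv (ez j) f) z)"
proof -
  have d1: "dderiv (ez j) f differentiable (at x)" for j x by (intro smooth_diff smooth_dd f)
  have "X i (calL V V0 \<sigma> f) z = X i (LE f) z + X i (\<lambda>z. \<Sum>j\<in>UNIV. \<sigma> (fst z) $ j * dderiv (ez j) f z) z"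
    unfolding calL_eq
    by (intro app_add differentiable_sum ballI diff_sig_mult d1 smooth_diff smLE f) auto
  also have "X i (\<lambda>z. \<Sum>j\<in>UNIV. \<sigma> (fst z) $ j * dderiv (ez j) f z) z =
      (\<Sum>j\<in>UNIV. X i (\<lambda>z. \<sigma> (fst z) $ j * dderiv (ez j) f z) z)"
    by (intro app_sum diff_sig_mult d1) auto
  also have "\<dots> = (\<Sum>j\<in>UNIV. vf_app (V i) (\<lambda>q. \<sigma> q $ j) (fst z) * dderiv (ez j) f z + \<sigma> (fst z) $ j * X i (dderiv (ez j) f) z)"
    by (intro sum.cong refl) (simp add: app_mult sig_diff d1 X_sig)
  finally show ?thesis .
qed

lemma ez_calL:
  assumes f: "smooth f"
  shows "dderiv (ez j) (calL V V0 \<sigma> f) z = LE (dderiv (ez j) f) z +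
     (\<Sum>l\<in>UNIV. \<sigma> (fst z) $ l * dderiv (ez j) (dderiv (ez l) f) z)"
proof -
  have d1: "dderiv (ez j) f differentiable (at x)" for j x by (intro smooth_diff smooth_dd f)
  have "dderiv (ez j) (calL V V0 \<sigma> f) z = dderiv (ez j) (LE f) z + dderiv (ez j) (\<lambda>z. \<Sum>l\<in>UNIV. \<sigma> (fst z) $ l * dderiv (ez l) f z) z"
    unfolding calL_eq
    by (intro dd_add differentiable_sum ballI diff_sig_mult d1 smooth_diff smLE f) auto
  also have "dderiv (ez j) (\<lambda>z. \<Sum>l\<in>UNIV. \<sigma> (fst z) $ l * dderiv (ez l) f z) z =
      (\<Sum>l\<in>UNIV. dderiv (ez j) (\<lambda>z. \<sigma> (fst z) $ l * dderiv (ez l) f z) z)"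
    by (intro dd_sum diff_sig_mult d1) auto
  also have "\<dots> = (\<Sum>l\<in>UNIV. \<sigma> (fst z) $ l * dderiv (ez j) (dderiv (ez l) f) z)"
    by (intro sum.cong refl) (simp add: dd_mult sig_diff d1 ez_sig)
  finally show ?thesis using ez_LE_comm[OF f] by simp
qed

end



context
  fixes V :: "'k::finite \<Rightarrow> real^'k \<Rightarrow> real^'k" and V0 :: "real^'k \<Rightarrow> real^'k"
    and \<sigma> :: "real^'k \<Rightarrow> real^'k"
  assumes Vs: "\<forall>i. smooth_vf (V i)" and V0s: "smooth_vf V0" and \<sigma>C: "C1_map \<sigma>"
begin

lemma Gamma2_eq:
  assumes f: "smooth f"
  shows "Gamma2 V V0 \<sigma> f (p, \<xi>) = Gamma2L V V0 (\<lambda>q. f (q, \<xi>)) p -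
     (\<Sum>i\<in>UNIV. \<Sum>j\<in>UNIV. app (PW (V i)) f (p, \<xi>) * vf_app (V i) (\<lambda>q. \<sigma> q $ j) p * dderiv (ez j) f (p, \<xi>))"
proof -
  let ?LE = "Lg (\<lambda>i. PW (V i)) (PW V0)"
  let ?X = "\<lambda>i. app (PW (V i))"
  define GE where "GE = (\<lambda>z. \<Sum>i\<in>UNIV. (?X i f z)\<^sup>2)"
  define z where "z = (p, \<xi>)"
  define a where "a i = ?X i f z" for i
  define c where "c i j = ?X i (dderiv (ez j) f) z" for i j
  define s where "s j = \<sigma> p $ j" for j
  define g where "g i j = vf_app (V i) (\<lambda>q. \<sigma> q $ j) p" for i j
  define Zf where "Zf j = dderiv (ez j) f z" for j
  define B where "B i = ?X i (?LE f) z" for i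
  have zp: "fst z = p" unfolding z_def by simp
  have GEs: "smooth GE" unfolding GE_def using GE_smooth[OF Vs V0s \<sigma>C f] .
  have Xs: "smooth (?X i f)" for i using smX[OF Vs V0s \<sigma>C f] .
  have G: "Gamma V V0 \<sigma> f = GE" unfolding GE_def using Gamma_eq[OF Vs V0s \<sigma>C f] .
  have dGE: "dderiv (ez j) GE z = (\<Sum>i\<in>UNIV. 2 * a i * c i j)" for j
  proof -
    have "dderiv (ez j) GE z = (\<Sum>i\<in>UNIV. dderiv (ez j) (\<lambda>y. (?X i f y)\<^sup>2) z)"
      unfolding GE_def by (intro dd_sum smooth_diff smooth_sq Xs) auto
    also have "\<dots> = (\<Sum>i\<in>UNIV. 2 * a i * dderiv (ez j) (?X i f) z)"
      unfolding a_def by (intro sum.cong refl dd_sq smooth_diff Xs)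
    also have "\<dots> = (\<Sum>i\<in>UNIV. 2 * a i * c i j)"
      unfolding c_def using ez_comm[OF Vs V0s \<sigma>C f] by simp
    finally show ?thesis .
  qed
  have cGE: "calL V V0 \<sigma> GE z = ?LE GE z + (\<Sum>j\<in>UNIV. s j * (\<Sum>i\<in>UNIV. 2 * a i * c i j))"
    unfolding calL_eq s_def using dGE zp by simp
  have bil: "Gamma_bil V f (calL V V0 \<sigma> f) z = (\<Sum>i\<in>UNIV. a i * (B i + (\<Sum>j\<in>UNIV. g i j * Zf j + s j * c i j)))"
    unfolding Gamma_bil_def pvf_eq a_def B_def g_def Zf_def s_def c_def
    using X_calL[OF Vs V0s \<sigma>C f] zp by simp
  have lf: "smooth (\<lambda>q. f (q, \<xi>))" using smooth_lift[OF f] .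
  have GL: "GammaL V V0 (\<lambda>q. f (q, \<xi>)) = (\<lambda>q. GE (q, \<xi>))"
    unfolding GammaL_smooth[OF Vs lf] GE_def
    using app_lift[OF smooth_diff[OF f]] by simp
  have LGL: "Lop V V0 (GammaL V V0 (\<lambda>q. f (q, \<xi>))) p = ?LE GE z"
    unfolding GL Lop_eq z_def by (rule Lg_lift[OF GEs Vs])
  have Lf: "Lop V V0 (\<lambda>q. f (q, \<xi>)) = (\<lambda>q. ?LE f (q, \<xi>))"
    unfolding Lop_eq using Lg_lift[OF f Vs] by auto
  have LEs: "smooth (?LE f)" using smLE[OF Vs V0s \<sigma>C f] .
  have GLb: "GammaL_bil V V0 (\<lambda>q. f (q, \<xi>)) (Lop V V0 (\<lambda>q. f (q, \<xi>))) p = (\<Sum>i\<in>UNIV. a i * B i)"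
    unfolding Lf GammaL_bil_smooth[OF Vs lf smooth_lift[OF LEs]]
    unfolding a_def B_def z_def
    using app_lift[OF smooth_diff[OF f]] app_lift[OF smooth_diff[OF LEs]] by simp
  have G2L: "Gamma2L V V0 (\<lambda>q. f (q, \<xi>)) p = (?LE GE z - 2 * (\<Sum>i\<in>UNIV. a i * B i)) / 2"
    unfolding Gamma2L_def LGL GLb ..
  have h1: "(\<Sum>j\<in>UNIV. s j * (\<Sum>i\<in>UNIV. 2 * a i * c i j)) = 2 * (\<Sum>i\<in>UNIV. a i * (\<Sum>j\<in>UNIV. s j * c i j))"
  proof -
    have "(\<Sum>j\<in>UNIV. s j * (\<Sum>i\<in>UNIV. 2 * a i * c i j)) = (\<Sum>j\<in>UNIV. \<Sum>i\<in>UNIV. s j * (2 * a i * c i j))"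
      by (simp add: sum_distrib_left)
    also have "\<dots> = (\<Sum>i\<in>UNIV. \<Sum>j\<in>UNIV. s j * (2 * a i * c i j))" by (rule sum.swap)
    also have "\<dots> = 2 * (\<Sum>i\<in>UNIV. a i * (\<Sum>j\<in>UNIV. s j * c i j))"
      by (simp add: sum_distrib_left mult_ac)
    finally show ?thesis .
  qed
  have h2: "(\<Sum>i\<in>UNIV. a i * (B i + (\<Sum>j\<in>UNIV. g i j * Zf j + s j * c i j))) =
     (\<Sum>i\<in>UNIV. a i * B i) + (\<Sum>i\<in>UNIV. \<Sum>j\<in>UNIV. a i * g i j * Zf j) + (\<Sum>i\<in>UNIV. a i * (\<Sum>j\<in>UNIV. s j * c i j))"
    by (simp add: sum.distrib distrib_left sum_distrib_left mult_ac)
  have "Gamma2 V V0 \<sigma> f z = (?LE GE z + (\<Sum>j\<in>UNIV. s j * (\<Sum>i\<in>UNIV. 2 * a i * c i j))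
      - 2 * (\<Sum>i\<in>UNIV. a i * (B i + (\<Sum>j\<in>UNIV. g i j * Zf j + s j * c i j)))) / 2"
    unfolding Gamma2_def G cGE bil ..
  also have "\<dots> = Gamma2L V V0 (\<lambda>q. f (q, \<xi>)) p - (\<Sum>i\<in>UNIV. \<Sum>j\<in>UNIV. a i * g i j * Zf j)"
    unfolding G2L h1 h2 by (simp add: field_simps)
  finally show ?thesis unfolding z_def a_def g_def Zf_def by simp
qed

lemma Gamma2Z_eq:
  assumes f: "smooth f"
  shows "Gamma2Z V V0 \<sigma> f z = (\<Sum>j\<in>UNIV. \<Sum>i\<in>UNIV. (app (PW (V i)) (dderiv (ez j) f) z)\<^sup>2)"
proof -
  let ?LE = "Lg (\<lambda>i. PW (V i)) (PW V0)"
  let ?X = "\<lambda>i. app (PW (V i))"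
  define GZ where "GZ = (\<lambda>z. \<Sum>j\<in>UNIV. (dderiv (ez j) f z)\<^sup>2)"
  define Zf where "Zf j = dderiv (ez j) f" for j
  define s where "s j = \<sigma> (fst z) $ j" for j
  define ZZ where "ZZ j l = dderiv (ez j) (dderiv (ez l) f) z" for j l
  have Zs: "smooth (Zf j)" for j unfolding Zf_def by (intro smooth_dd f)
  have GZe: "GammaZ f = GZ" unfolding GammaZ_def GZ_def dxi_eq ..
  have LGZ: "?LE GZ z = (\<Sum>j\<in>UNIV. 2 * Zf j z * ?LE (Zf j) z + 2 * (\<Sum>i\<in>UNIV. (?X i (Zf j) z)\<^sup>2))"
  proof -
    have "?LE GZ z = (\<Sum>j\<in>UNIV. ?LE (\<lambda>y. Zf j y * Zf j y) z)"
      unfolding GZ_def power2_eq_square Zf_def[symmetric]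
      by (intro Lg_sum ballI allI smooth_diff smooth_mult Zs sm_D2 csX[OF Vs V0s \<sigma>C]) auto
    also have "\<dots> = (\<Sum>j\<in>UNIV. 2 * Zf j z * ?LE (Zf j) z + 2 * (\<Sum>i\<in>UNIV. (?X i (Zf j) z)\<^sup>2))"
    proof (intro sum.cong refl)
      fix j
      have "?LE (\<lambda>y. Zf j y * Zf j y) z = Zf j z * ?LE (Zf j) z + Zf j z * ?LE (Zf j) z +
          2 * (\<Sum>i\<in>UNIV. ?X i (Zf j) z * ?X i (Zf j) z)"
        by (intro Lg_mult D2X[OF Vs V0s \<sigma>C] Zs allI smooth_diff)
      then show "?LE (\<lambda>y. Zf j y * Zf j y) z = 2 * Zf j z * ?LE (Zf j) z + 2 * (\<Sum>i\<in>UNIV. (?X i (Zf j) z)\<^sup>2)"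
        by (simp add: power2_eq_square)
    qed
    finally show ?thesis .
  qed
  have dGZ: "dderiv (ez l) GZ z = (\<Sum>j\<in>UNIV. 2 * Zf j z * ZZ j l)" for l
  proof -
    have "dderiv (ez l) GZ z = (\<Sum>j\<in>UNIV. dderiv (ez l) (\<lambda>y. (Zf j y)\<^sup>2) z)"
      unfolding GZ_def Zf_def[symmetric] by (intro dd_sum smooth_diff smooth_sq Zs) auto
    also have "\<dots> = (\<Sum>j\<in>UNIV. 2 * Zf j z * dderiv (ez l) (Zf j) z)"
      by (intro sum.cong refl dd_sq smooth_diff Zs)
    also have "\<dots> = (\<Sum>j\<in>UNIV. 2 * Zf j z * ZZ j l)"
      unfolding ZZ_def Zf_def using dd_symm[OF f] by simp
    finally show ?thesis .
  qed
  have cGZ: "calL V V0 \<sigma> GZ z = ?LE GZ z + (\<Sum>l\<in>UNIV. s l * (\<Sum>j\<in>UNIV. 2 * Zf j z * ZZ j l))"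
    unfolding calL_eq s_def using dGZ by simp
  have bil: "GammaZ_bil f (calL V V0 \<sigma> f) z = (\<Sum>j\<in>UNIV. Zf j z * (?LE (Zf j) z + (\<Sum>l\<in>UNIV. s l * ZZ j l)))"
    unfolding GammaZ_bil_def dxi_eq Zf_def s_def ZZ_def
    using ez_calL[OF Vs V0s \<sigma>C f] by simp
  have h1: "(\<Sum>l\<in>UNIV. s l * (\<Sum>j\<in>UNIV. 2 * Zf j z * ZZ j l)) = 2 * (\<Sum>j\<in>UNIV. Zf j z * (\<Sum>l\<in>UNIV. s l * ZZ j l))"
  proof -
    have "(\<Sum>l\<in>UNIV. s l * (\<Sum>j\<in>UNIV. 2 * Zf j z * ZZ j l)) = (\<Sum>l\<in>UNIV. \<Sum>j\<in>UNIV. s l * (2 * Zf j z * ZZ j l))"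
      by (simp add: sum_distrib_left)
    also have "\<dots> = (\<Sum>j\<in>UNIV. \<Sum>l\<in>UNIV. s l * (2 * Zf j z * ZZ j l))" by (rule sum.swap)
    also have "\<dots> = 2 * (\<Sum>j\<in>UNIV. Zf j z * (\<Sum>l\<in>UNIV. s l * ZZ j l))"
      by (simp add: sum_distrib_left mult_ac)
    finally show ?thesis .
  qed
  have h2: "(\<Sum>j\<in>UNIV. Zf j z * (?LE (Zf j) z + (\<Sum>l\<in>UNIV. s l * ZZ j l))) =
     (\<Sum>j\<in>UNIV. Zf j z * ?LE (Zf j) z) + (\<Sum>j\<in>UNIV. Zf j z * (\<Sum>l\<in>UNIV. s l * ZZ j l))"
    by (simp add: sum.distrib distrib_left)
  have h3: "(\<Sum>j\<in>UNIV. 2 * Zf j z * ?LE (Zf j) z + 2 * (\<Sum>i\<in>UNIV. (?X i (Zf j) z)\<^sup>2)) =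
     2 * (\<Sum>j\<in>UNIV. Zf j z * ?LE (Zf j) z) + 2 * (\<Sum>j\<in>UNIV. \<Sum>i\<in>UNIV. (?X i (Zf j) z)\<^sup>2)"
    by (simp add: sum.distrib sum_distrib_left mult_ac)
  have "Gamma2Z V V0 \<sigma> f z = (\<Sum>j\<in>UNIV. \<Sum>i\<in>UNIV. (?X i (Zf j) z)\<^sup>2)"
    unfolding Gamma2Z_def GZe cGZ bil LGZ h1 h2 h3 by (simp add: field_simps)
  then show ?thesis unfolding Zf_def .
qed

end



lemma cs_bound:
  fixes a :: "'i::finite \<Rightarrow> real" and b :: "'j::finite \<Rightarrow> real" and M :: "'i \<Rightarrow> 'j \<Rightarrow> real"
  assumes C: "sqrt (\<Sum>i\<in>UNIV. \<Sum>j\<in>UNIV. (M i j)\<^sup>2) \<le> C"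
  shows "(\<Sum>i\<in>UNIV. \<Sum>j\<in>UNIV. a i * M i j * b j) \<le> C / 2 * ((\<Sum>i\<in>UNIV. (a i)\<^sup>2) + (\<Sum>j\<in>UNIV. (b j)\<^sup>2))"
proof -
  define A where "A = (\<Sum>i\<in>UNIV. (a i)\<^sup>2)"
  define B where "B = (\<Sum>j\<in>UNIV. (b j)\<^sup>2)"
  define Q where "Q = (\<Sum>i\<in>UNIV. \<Sum>j\<in>UNIV. (M i j)\<^sup>2)"
  define S where "S = (\<Sum>i\<in>UNIV. \<Sum>j\<in>UNIV. a i * M i j * b j)"
  have A0: "A \<ge> 0" "B \<ge> 0" "Q \<ge> 0" unfolding A_def B_def Q_def by (auto intro!: sum_nonneg)
  have C0: "C \<ge> 0" using C real_sqrt_ge_zero[OF A0(3)] unfolding Q_def by linarith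
  have QC: "Q \<le> C\<^sup>2"
  proof -
    have CQ: "sqrt Q \<le> C" using C unfolding Q_def .
    have "(sqrt Q)\<^sup>2 \<le> C\<^sup>2" by (rule power_mono[OF CQ real_sqrt_ge_zero[OF A0(3)]])
    then show ?thesis using A0(3) by simp
  qed
  have S1: "S = (\<Sum>x\<in>UNIV \<times> UNIV. M (fst x) (snd x) * (a (fst x) * b (snd x)))"
    unfolding S_def sum.cartesian_product by (simp add: case_prod_beta mult_ac)
  have Q1: "Q = (\<Sum>x\<in>UNIV \<times> UNIV. (M (fst x) (snd x))\<^sup>2)"
    unfolding Q_def sum.cartesian_product by (simp add: case_prod_beta)
  have AB: "A * B = (\<Sum>x\<in>UNIV \<times> UNIV. (a (fst x) * b (snd x))\<^sup>2)"
    unfolding A_def B_def sum_product sum.cartesian_product by (simp add: case_prod_beta power_mult_distrib)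
  have "S\<^sup>2 \<le> Q * (A * B)" unfolding S1 Q1 AB by (rule Cauchy_Schwarz_ineq_sum)
  also have "\<dots> \<le> C\<^sup>2 * (A * B)" using QC A0 by (intro mult_right_mono) auto
  also have "\<dots> \<le> C\<^sup>2 * ((A + B) / 2)\<^sup>2"
  proof -
    have "A * B \<le> ((A + B) / 2)\<^sup>2"
    proof -
      have "0 \<le> ((A - B) / 2)\<^sup>2" by simp
      then show ?thesis by (simp add: power2_eq_square field_simps)
    qed
    then show ?thesis by (intro mult_left_mono) auto
  qed
  also have "\<dots> = (C / 2 * (A + B))\<^sup>2" by (simp add: power2_eq_square field_simps)
  finally have "S\<^sup>2 \<le> (C / 2 * (A + B))\<^sup>2" .
  moreover have "0 \<le> C / 2 * (A + B)" using C0 A0(1,2) by (intro mult_nonneg_nonneg) auto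
  ultimately have "S \<le> C / 2 * (A + B)" by (rule power2_le_imp_le)
  then show ?thesis unfolding S_def A_def B_def .
qed

theorem theorem4p1:
  fixes V :: "'k::finite \<Rightarrow> real^'k \<Rightarrow> real^'k"
    and V0 :: "real^'k \<Rightarrow> real^'k"
    and \<sigma> :: "real^'k \<Rightarrow> real^'k"
    and \<rho> :: real
  assumes V_smooth: "\<forall>i. smooth_vf (V i)"
    and V0_smooth: "smooth_vf V0"
    and \<sigma>_C1: "C1_map \<sigma>"
    and C\<sigma>_finite: "bdd_above (range (sigma_grad_norm V \<sigma>))"
    and curv: "\<forall>g :: real^'k \<Rightarrow> real. smooth g \<longrightarrow>
                 (\<forall>p. Gamma2L V V0 g p \<ge> \<rho> * GammaL V V0 g p)"
  shows "\<forall>f :: (real^'k) \<times> (real^'k) \<Rightarrow> real. smooth f \<longrightarrow>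
           (\<forall>z. Gamma2 V V0 \<sigma> f z \<ge>
                  (\<rho> - (SUP p. sigma_grad_norm V \<sigma> p) / 2) * Gamma V V0 \<sigma> f z
                  - (SUP p. sigma_grad_norm V \<sigma> p) / 2 * GammaZ f z
                \<and> Gamma2Z V V0 \<sigma> f z \<ge> 0)"
proof (intro allI impI conjI)
  fix f :: "(real^'k) \<times> (real^'k) \<Rightarrow> real" and z :: "(real^'k) \<times> (real^'k)"
  assume f: "smooth f"
  define C where "C = (SUP p. sigma_grad_norm V \<sigma> p)"
  obtain p \<xi> where z: "z = (p, \<xi>)" by (cases z)
  define a where "a i = app (PW (V i)) f z" for i
  define M where "M i j = vf_app (V i) (\<lambda>q. \<sigma> q $ j) p" for i j
  define b where "b j = dderiv (ez j) f z" for j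
  have lf: "smooth (\<lambda>q. f (q, \<xi>))" using smooth_lift[OF f] .
  have G2: "Gamma2 V V0 \<sigma> f z = Gamma2L V V0 (\<lambda>q. f (q, \<xi>)) p - (\<Sum>i\<in>UNIV. \<Sum>j\<in>UNIV. a i * M i j * b j)"
    unfolding z a_def M_def b_def by (rule Gamma2_eq[OF V_smooth V0_smooth \<sigma>_C1 f])
  have GL: "GammaL V V0 (\<lambda>q. f (q, \<xi>)) p = Gamma V V0 \<sigma> f z"
    unfolding GammaL_smooth[OF V_smooth lf] Gamma_eq[OF V_smooth V0_smooth \<sigma>_C1 f] z
    using app_lift[OF smooth_diff[OF f]] by simp
  have Ga: "Gamma V V0 \<sigma> f z = (\<Sum>i\<in>UNIV. (a i)\<^sup>2)"
    unfolding Gamma_eq[OF V_smooth V0_smooth \<sigma>_C1 f] a_def ..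
  have GZ: "GammaZ f z = (\<Sum>j\<in>UNIV. (b j)\<^sup>2)"
    unfolding GammaZ_def dxi_eq b_def ..
  have cv: "Gamma2L V V0 (\<lambda>q. f (q, \<xi>)) p \<ge> \<rho> * Gamma V V0 \<sigma> f z"
    using curv[rule_format, OF lf, of p] unfolding GL .
  have "sigma_grad_norm V \<sigma> p \<le> C" unfolding C_def by (rule cSUP_upper[OF _ C\<sigma>_finite]) simp
  then have Mb: "sqrt (\<Sum>i\<in>UNIV. \<Sum>j\<in>UNIV. (M i j)\<^sup>2) \<le> C"
    unfolding sigma_grad_norm_def M_def .
  have S: "(\<Sum>i\<in>UNIV. \<Sum>j\<in>UNIV. a i * M i j * b j) \<le> C / 2 * (Gamma V V0 \<sigma> f z + GammaZ f z)"
    unfolding Ga GZ by (rule cs_bound[OF Mb])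
  show "(\<rho> - C / 2) * Gamma V V0 \<sigma> f z - C / 2 * GammaZ f z \<le> Gamma2 V V0 \<sigma> f z"
    using G2 cv S by (simp add: algebra_simps)
  show "Gamma2Z V V0 \<sigma> f z \<ge> 0"
    unfolding Gamma2Z_eq[OF V_smooth V0_smooth \<sigma>_C1 f] by (intro sum_nonneg) auto
qed


end
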